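(* Suppose there is $K>0$ such that $\|\nabla_{(\theta,x)}\ell(\theta,x)-\nabla_{(\theta,x)}\ell(\theta',x')\|\le K\|(\theta,x)-(\theta',x')\|$ for all $(\theta,x),(\theta',x')\in\mathbb{R}^{d_\theta}\times\mathbb{R}^{d_x}$. Fix $\eta_\theta,\gamma_\theta,\eta_x,\gamma_x>0$ and define $b:\mathbb{R}^{2d_x}\times\mathbb{R}^{2d_\theta}\times\mathcal{P}(\mathbb{R}^{2d_x})\to\mathbb{R}^{2d_\theta+2d_x}$ by $$b((x,u),(\theta,m),q)=\begin{pmatrix}\eta_\theta m\\-\gamma_\theta\eta_\theta m-\nabla_\theta\mathcal{F}(\theta,q)\\\eta_xu\\-\gamma_x\eta_xu+\nabla_x\ell(\theta,x)\end{pmatrix}.$$ Then there is a constant $K_b>0$ such that $$\|b(\Upsilon,\vartheta,q)-b(\Upsilon',\vartheta',q')\|\le K_b\big(\|\Upsilon-\Upsilon'\|+\|\vartheta-\vartheta'\|+\mathsf{W}_1(q,q')\big)$$ for all $\Upsilon,\Upsilon'\in\mathbb{R}^{2d_x}$, $\vartheta,\vartheta'\in\mathbb{R}^{2d_\theta}$ and $q,q'\in\mathcal{P}(\mathbb{R}^{2d_x})$.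
   Context: $\ell(\theta,x)=\log p_\theta(y,x)$ for a latent variable model with fixed data $y$. $\mathcal{P}(\mathbb{R}^{2d_x})$: probability measures on $\mathbb{R}^{d_x}\times\mathbb{R}^{d_x}$ with Lebesgue density and finite second moment; $\mathsf{W}_1$ is the Wasserstein-1 distance. $\nabla_\theta\mathcal{F}(\theta,q):=-\int\nabla_\theta\ell(\theta,x)\,q(\mathrm{d}x,\mathrm{d}u)$. Points are written $\Upsilon=(x,u)$ and $\vartheta=(\theta,m)$. *)

theory Defs
  imports "HOL-Probability.Probability"
begin

definition Pspace :: "'a::euclidean_space measure set" where
  "Pspace = {q. prob_space q
              \<and> (\<exists>f. f \<in> borel_measurable lborel \<and> q = density lborel f)
              \<and> (\<integral>\<^sup>+ z. ennreal ((norm z)\<^sup>2) \<partial>q) < \<infinity>}"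

definition couplings :: "'a::euclidean_space measure \<Rightarrow> 'a measure \<Rightarrow> ('a \<times> 'a) measure set" where
  "couplings \<mu> \<nu> = {\<pi>. prob_space \<pi> \<and> sets \<pi> = sets (borel \<Otimes>\<^sub>M borel)
                        \<and> distr \<pi> borel fst = \<mu> \<and> distr \<pi> borel snd = \<nu>}"

definition W1 :: "'a::euclidean_space measure \<Rightarrow> 'a measure \<Rightarrow> ennreal" where
  "W1 \<mu> \<nu> = (INF \<pi>\<in>couplings \<mu> \<nu>. \<integral>\<^sup>+ p. ennreal (dist (fst p) (snd p)) \<partial>\<pi>)"

text \<open>The drift b. G is the full gradient of l (pairs (theta, x)); fst (G (theta,x)) is
  grad_theta l and snd (G (theta,x)) is grad_x l.  grad_theta F(theta,q) = - int grad_theta l(theta,x) q(dx,du).\<close>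
definition drift ::
  "real \<Rightarrow> real \<Rightarrow> real \<Rightarrow> real \<Rightarrow> ('a::euclidean_space \<times> 'b::euclidean_space \<Rightarrow> 'a \<times> 'b)
   \<Rightarrow> 'b \<times> 'b \<Rightarrow> 'a \<times> 'a \<Rightarrow> ('b \<times> 'b) measure \<Rightarrow> ('a \<times> 'a) \<times> ('b \<times> 'b)" where
  "drift \<eta>\<theta> \<gamma>\<theta> \<eta>x \<gamma>x G \<Upsilon> \<omega> q =
     (let x = fst \<Upsilon>; u = snd \<Upsilon>; \<theta> = fst \<omega>; m = snd \<omega>;
          gradF = - (\<integral> z. fst (G (\<theta>, fst z)) \<partial>q)
      in ((\<eta>\<theta> *\<^sub>R m, - (\<gamma>\<theta> * \<eta>\<theta>) *\<^sub>R m - gradF),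
          (\<eta>x *\<^sub>R u, - (\<gamma>x * \<eta>x) *\<^sub>R u + snd (G (\<theta>, x)))))"

end

theory Submission
  imports Defs
begin

lemma norm_fst_le': "norm (fst v) \<le> norm v"
  by (cases v) (simp add: norm_fst_le)
lemma norm_snd_le': "norm (snd v) \<le> norm v"
  by (cases v) (simp add: norm_snd_le)

lemma G_cont:
  fixes G :: "'c::real_normed_vector \<Rightarrow> 'd::real_normed_vector"
  assumes Lip: "\<And>z z'. norm (G z - G z') \<le> K * norm (z - z')" and K: "K > 0"
  shows "continuous_on UNIV G"
  by (rule lipschitz_on_continuous_on[of K], rule lipschitz_onI)
     (use Lip K in \<open>auto simp: dist_norm\<close>)

lemma Pspace_sets: "q \<in> Pspace \<Longrightarrow> sets q = sets borel"
  unfolding Pspace_def by auto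

lemma Pspace_integrable:
  fixes G :: "'a::euclidean_space \<times> 'b::euclidean_space \<Rightarrow> 'a \<times> 'b"
  assumes Lip: "\<And>z z'. norm (G z - G z') \<le> K * norm (z - z')" and K: "K > 0"
    and q: "q \<in> Pspace"
  shows "integrable q (\<lambda>z::'b\<times>'b. fst (G (\<theta>, fst z)))"
proof -
  have ps: "prob_space q" using q unfolding Pspace_def by auto
  have fin: "(\<integral>\<^sup>+ z. ennreal ((norm z)\<^sup>2) \<partial>q) < \<infinity>" using q unfolding Pspace_def by auto
  have sq: "sets q = sets borel" using q by (rule Pspace_sets)
  have cG: "continuous_on UNIV G" using G_cont[OF Lip K] .
  have cg: "continuous_on UNIV (\<lambda>z::'b\<times>'b. fst (G (\<theta>, fst z)))"
    by (intro continuous_intros continuous_on_compose2[OF cG]) auto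
  have mg: "(\<lambda>z::'b\<times>'b. fst (G (\<theta>, fst z))) \<in> borel_measurable q"
    using borel_measurable_continuous_onI[OF cg] measurable_cong_sets[OF sq refl] by blast
  have mn: "(\<lambda>z::'b\<times>'b. ennreal ((norm z)\<^sup>2)) \<in> borel_measurable q"
    using measurable_cong_sets[OF sq refl] by (metis borel_measurable_norm borel_measurable_power measurable_compose measurable_id measurable_ennreal)
  define A where "A = norm (G (\<theta>, 0))"
  have bd: "norm (fst (G (\<theta>, fst z))) \<le> (A + K) + K * (norm z)\<^sup>2" for z :: "'b\<times>'b"
  proof -
    have "norm (fst (G (\<theta>, fst z))) \<le> norm (G (\<theta>, fst z))" by (rule norm_fst_le')
    also have "\<dots> \<le> norm (G (\<theta>, 0)) + norm (G (\<theta>, fst z) - G (\<theta>, 0))" by (metis norm_triangle_sub add.commute)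
    also have "\<dots> \<le> A + K * norm (fst z)" using Lip[of "(\<theta>, fst z)" "(\<theta>, 0)"] by (simp add: A_def)
    also have "\<dots> \<le> A + K * (1 + (norm z)\<^sup>2)"
    proof -
      have "norm (fst z) \<le> norm z" by (rule norm_fst_le')
      also have "norm z \<le> 1 + (norm z)\<^sup>2"
      proof -
        have "0 \<le> (norm z - 1)\<^sup>2" by simp
        then have "0 \<le> (norm z)\<^sup>2 - 2 * norm z + 1" by (simp add: power2_diff)
        moreover have "0 \<le> (norm z)\<^sup>2" by simp
        ultimately show ?thesis by linarith
      qed
      finally show ?thesis using K by (simp add: mult_left_mono)
    qed
    finally show ?thesis by (simp add: algebra_simps)
  qed
  have "(\<integral>\<^sup>+ z. ennreal (norm (fst (G (\<theta>, fst z)))) \<partial>q) \<le> (\<integral>\<^sup>+ z. ennreal (A + K) + ennreal K * ennreal ((norm z)\<^sup>2) \<partial>q)"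
    using bd K by (intro nn_integral_mono) (simp add: ennreal_mult[symmetric] ennreal_plus[symmetric] A_def del: ennreal_plus)
  also have "\<dots> = ennreal (A + K) * emeasure q (space q) + ennreal K * (\<integral>\<^sup>+ z. ennreal ((norm z)\<^sup>2) \<partial>q)"
    using mn by (simp add: nn_integral_add nn_integral_cmult)
  also have "\<dots> < \<infinity>" using fin prob_space.emeasure_space_1[OF ps]
    by (simp add: ennreal_mult_less_top)
  finally show ?thesis by (intro integrableI_bounded mg)
qed


lemma g_lip:
  fixes G :: "'a::euclidean_space \<times> 'b::euclidean_space \<Rightarrow> 'a \<times> 'b"
  assumes Lip: "\<And>z z'. norm (G z - G z') \<le> K * norm (z - z')" and K: "K > 0"
  shows "norm (fst (G (\<theta>, x)) - fst (G (\<theta>', x'))) \<le> K * (norm (\<theta> - \<theta>') + norm (x - x'))"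
proof -
  have "norm (fst (G (\<theta>, x)) - fst (G (\<theta>', x'))) = norm (fst (G (\<theta>, x) - G (\<theta>', x')))" by simp
  also have "\<dots> \<le> norm (G (\<theta>, x) - G (\<theta>', x'))" by (rule norm_fst_le')
  also have "\<dots> \<le> K * norm ((\<theta>, x) - (\<theta>', x'))" by (rule Lip)
  also have "\<dots> \<le> K * (norm (\<theta> - \<theta>') + norm (x - x'))"
  proof -
    have "K \<ge> 0" using K by simp
    then show ?thesis using norm_Pair_le[of "\<theta> - \<theta>'" "x - x'"] by (simp add: mult_left_mono)
  qed
  finally show ?thesis .
qed

lemma I_lip:
  fixes G :: "'a::euclidean_space \<times> 'b::euclidean_space \<Rightarrow> 'a \<times> 'b" and q :: "('b \<times> 'b) measure"
  assumes Lip: "\<And>z z'. norm (G z - G z') \<le> K * norm (z - z')" and K: "K > 0"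
    and q: "q \<in> Pspace"
  shows "norm ((\<integral>z. fst (G (\<theta>, fst z)) \<partial>q) - (\<integral>z. fst (G (\<theta>', fst z)) \<partial>q)) \<le> K * norm (\<theta> - \<theta>')"
proof -
  have ps: "prob_space q" using q unfolding Pspace_def by auto
  have i1: "integrable q (\<lambda>z::'b\<times>'b. fst (G (\<theta>, fst z)))" by (rule Pspace_integrable[OF Lip K q])
  have i2: "integrable q (\<lambda>z::'b\<times>'b. fst (G (\<theta>', fst z)))" by (rule Pspace_integrable[OF Lip K q])
  have "ennreal (norm ((\<integral>z. fst (G (\<theta>, fst z)) \<partial>q) - (\<integral>z. fst (G (\<theta>', fst z)) \<partial>q)))
      = ennreal (norm (\<integral>z. fst (G (\<theta>, fst z)) - fst (G (\<theta>', fst z)) \<partial>q))"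
    using i1 i2 by (simp add: integral_diff)
  also have "\<dots> \<le> (\<integral>\<^sup>+z. norm (fst (G (\<theta>, fst z)) - fst (G (\<theta>', fst z))) \<partial>q)"
    using i1 i2 by (intro integral_norm_bound_ennreal Bochner_Integration.integrable_diff)
  also have "\<dots> \<le> (\<integral>\<^sup>+z. ennreal (K * norm (\<theta> - \<theta>')) \<partial>q)"
  proof (intro nn_integral_mono ennreal_leI)
    fix z :: "'b \<times> 'b"
    show "norm (fst (G (\<theta>, fst z)) - fst (G (\<theta>', fst z))) \<le> K * norm (\<theta> - \<theta>')"
      using g_lip[OF Lip K, of \<theta> "fst z" \<theta>' "fst z"] by simp
  qed
  also have "\<dots> = ennreal (K * norm (\<theta> - \<theta>'))"
    using prob_space.emeasure_space_1[OF ps] by simp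
  finally show ?thesis using K by (simp add: ennreal_le_iff)
qed

lemma W1_bound:
  fixes G :: "'a::euclidean_space \<times> 'b::euclidean_space \<Rightarrow> 'a \<times> 'b" and q q' :: "('b \<times> 'b) measure"
  assumes Lip: "\<And>z z'. norm (G z - G z') \<le> K * norm (z - z')" and K: "K > 0"
    and q: "q \<in> Pspace" and q': "q' \<in> Pspace"
  shows "ennreal (norm ((\<integral>z. fst (G (\<theta>, fst z)) \<partial>q) - (\<integral>z. fst (G (\<theta>, fst z)) \<partial>q')) / K) \<le> W1 q q'"
  unfolding W1_def
proof (rule INF_greatest)
  fix \<pi> assume \<pi>: "\<pi> \<in> couplings q q'"
  define g where "g = (\<lambda>z::'b\<times>'b. fst (G (\<theta>, fst z)))"
  have s\<pi>: "sets \<pi> = sets (borel \<Otimes>\<^sub>M borel)" and d1: "distr \<pi> borel fst = q" and d2: "distr \<pi> borel snd = q'"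
    using \<pi> unfolding couplings_def by auto
  have s\<pi>': "sets \<pi> = sets borel" by (simp only: s\<pi> borel_prod)
  have mf: "fst \<in> measurable \<pi> borel" using measurable_cong_sets[OF s\<pi> refl] measurable_fst by blast
  have ms: "snd \<in> measurable \<pi> borel" using measurable_cong_sets[OF s\<pi> refl] measurable_snd by blast
  have cG: "continuous_on UNIV G" using G_cont[OF Lip K] .
  have cg: "continuous_on UNIV g" unfolding g_def
    by (intro continuous_intros continuous_on_compose2[OF cG]) auto
  have mg: "g \<in> borel_measurable borel" using borel_measurable_continuous_onI[OF cg] .
  have i1: "integrable q g" unfolding g_def by (rule Pspace_integrable[OF Lip K q])
  have i2: "integrable q' g" unfolding g_def by (rule Pspace_integrable[OF Lip K q'])
  have j1: "integrable \<pi> (\<lambda>p. g (fst p))" using i1 integrable_distr_eq[OF mf mg] d1 by simp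
  have j2: "integrable \<pi> (\<lambda>p. g (snd p))" using i2 integrable_distr_eq[OF ms mg] d2 by simp
  have e1: "integral\<^sup>L q g = (\<integral>p. g (fst p) \<partial>\<pi>)" using integral_distr[OF mf mg] d1 by simp
  have e2: "integral\<^sup>L q' g = (\<integral>p. g (snd p) \<partial>\<pi>)" using integral_distr[OF ms mg] d2 by simp
  have md: "(\<lambda>p::('b\<times>'b)\<times>('b\<times>'b). ennreal (dist (fst p) (snd p))) \<in> borel_measurable \<pi>"
  proof -
    have "(\<lambda>p::('b\<times>'b)\<times>('b\<times>'b). ennreal (dist (fst p) (snd p))) \<in> borel_measurable (borel \<Otimes>\<^sub>M borel)"
      by measurable
    then show ?thesis using measurable_cong_sets[OF s\<pi> refl] by blast
  qed
  have "ennreal (norm (integral\<^sup>L q g - integral\<^sup>L q' g)) = ennreal (norm (\<integral>p. g (fst p) - g (snd p) \<partial>\<pi>))"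
    using j1 j2 e1 e2 by (simp add: integral_diff)
  also have "\<dots> \<le> (\<integral>\<^sup>+p. norm (g (fst p) - g (snd p)) \<partial>\<pi>)"
    using j1 j2 by (intro integral_norm_bound_ennreal Bochner_Integration.integrable_diff)
  also have "\<dots> \<le> (\<integral>\<^sup>+p. ennreal K * ennreal (dist (fst p) (snd p)) \<partial>\<pi>)"
  proof (intro nn_integral_mono)
    fix p :: "('b\<times>'b)\<times>('b\<times>'b)"
    have "norm (g (fst p) - g (snd p)) \<le> K * (norm (\<theta> - \<theta>) + norm (fst (fst p) - fst (snd p)))"
      unfolding g_def by (rule g_lip[OF Lip K])
    also have "\<dots> \<le> K * dist (fst p) (snd p)"
      using K norm_fst_le'[of "fst p - snd p"] by (simp add: dist_norm mult_left_mono)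
    finally show "ennreal (norm (g (fst p) - g (snd p))) \<le> ennreal K * ennreal (dist (fst p) (snd p))"
      using K by (simp add: ennreal_mult[symmetric] ennreal_leI)
  qed
  also have "\<dots> = ennreal K * (\<integral>\<^sup>+p. ennreal (dist (fst p) (snd p)) \<partial>\<pi>)"
    using md by (rule nn_integral_cmult)
  finally have le: "ennreal K * ennreal (norm (integral\<^sup>L q g - integral\<^sup>L q' g) / K) \<le> ennreal K * (\<integral>\<^sup>+p. ennreal (dist (fst p) (snd p)) \<partial>\<pi>)"
    using K by (simp add: ennreal_mult[symmetric])
  show "ennreal (norm ((\<integral>z. fst (G (\<theta>, fst z)) \<partial>q) - (\<integral>z. fst (G (\<theta>, fst z)) \<partial>q')) / K) \<le> (\<integral>\<^sup>+p. ennreal (dist (fst p) (snd p)) \<partial>\<pi>)"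
    using le K unfolding g_def by (simp add: ennreal_mult_le_mult_iff)
qed


theorem propositionG2:
  fixes ell :: "'a::euclidean_space \<times> 'b::euclidean_space \<Rightarrow> real"
    and G :: "'a \<times> 'b \<Rightarrow> 'a \<times> 'b"
    and K \<eta>\<theta> \<gamma>\<theta> \<eta>x \<gamma>x :: real
  assumes grad: "\<And>z. (ell has_derivative (\<lambda>h. G z \<bullet> h)) (at z)"
    and K_pos: "K > 0"
    and Lip: "\<And>z z'. norm (G z - G z') \<le> K * norm (z - z')"
    and params: "\<eta>\<theta> > 0" "\<gamma>\<theta> > 0" "\<eta>x > 0" "\<gamma>x > 0"
  shows "\<exists>Kb > 0. \<forall>\<Upsilon> \<Upsilon>' \<omega> \<omega>' q q'. q \<in> Pspace \<longrightarrow> q' \<in> Pspace \<longrightarrow>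
           ennreal (norm (drift \<eta>\<theta> \<gamma>\<theta> \<eta>x \<gamma>x G \<Upsilon> \<omega> q - drift \<eta>\<theta> \<gamma>\<theta> \<eta>x \<gamma>x G \<Upsilon>' \<omega>' q'))
             \<le> ennreal Kb * (ennreal (norm (\<Upsilon> - \<Upsilon>') + norm (\<omega> - \<omega>')) + W1 q q')"
proof -
  define C where "C = \<eta>\<theta> + \<gamma>\<theta> * \<eta>\<theta> + \<eta>x + \<gamma>x * \<eta>x + 2 * K"
  have C_pos: "C > 0" using params K_pos by (simp add: C_def add_pos_pos)
  have CK: "K \<le> C" using params K_pos by (simp add: C_def)
  define I where "I = (\<lambda>\<theta> (q::('b\<times>'b) measure). \<integral>z. fst (G (\<theta>, fst z)) \<partial>q)"
  show ?thesis
  proof (intro exI[of _ C] conjI allI impI C_pos)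
    fix \<Upsilon> \<Upsilon>' :: "'b \<times> 'b" and \<omega> \<omega>' :: "'a \<times> 'a" and q q' :: "('b \<times> 'b) measure"
    assume q: "q \<in> Pspace" and q': "q' \<in> Pspace"
    obtain x u where U: "\<Upsilon> = (x, u)" by (cases \<Upsilon>)
    obtain x' u' where U': "\<Upsilon>' = (x', u')" by (cases \<Upsilon>')
    obtain \<theta> m where W: "\<omega> = (\<theta>, m)" by (cases \<omega>)
    obtain \<theta>' m' where W': "\<omega>' = (\<theta>', m')" by (cases \<omega>')
    define dU where "dU = norm (\<Upsilon> - \<Upsilon>')"
    define dW where "dW = norm (\<omega> - \<omega>')"
    define D where "D = norm (I \<theta>' q - I \<theta>' q')"
    have eq: "drift \<eta>\<theta> \<gamma>\<theta> \<eta>x \<gamma>x G \<Upsilon> \<omega> q - drift \<eta>\<theta> \<gamma>\<theta> \<eta>x \<gamma>x G \<Upsilon>' \<omega>' q'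
      = ((\<eta>\<theta> *\<^sub>R (m - m'), - (\<gamma>\<theta> * \<eta>\<theta>) *\<^sub>R (m - m') + (I \<theta> q - I \<theta>' q')),
         (\<eta>x *\<^sub>R (u - u'), - (\<gamma>x * \<eta>x) *\<^sub>R (u - u') + (snd (G (\<theta>, x)) - snd (G (\<theta>', x')))))"
      unfolding U U' W W' drift_def Let_def I_def by (simp add: algebra_simps)
    have hx: "norm (x - x') \<le> dU" unfolding dU_def U U' using norm_fst_le[of "x - x'" "u - u'"] by simp
    have hu: "norm (u - u') \<le> dU" unfolding dU_def U U' using norm_snd_le'[of "(x - x', u - u')"] by simp
    have ht: "norm (\<theta> - \<theta>') \<le> dW" unfolding dW_def W W' using norm_fst_le[of "\<theta> - \<theta>'" "m - m'"] by simp
    have hm: "norm (m - m') \<le> dW" unfolding dW_def W W' using norm_snd_le'[of "(\<theta> - \<theta>', m - m')"] by simp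
    have n1: "norm (\<eta>\<theta> *\<^sub>R (m - m')) \<le> \<eta>\<theta> * dW"
      using hm params by (simp add: mult_left_mono)
    have hI: "norm (I \<theta> q - I \<theta>' q) \<le> K * dW"
    proof -
      have "K * norm (\<theta> - \<theta>') \<le> K * dW" using ht K_pos by (simp add: mult_left_mono)
      then show ?thesis using I_lip[OF Lip K_pos q, of \<theta> \<theta>'] unfolding I_def by linarith
    qed
    have n2: "norm (- (\<gamma>\<theta> * \<eta>\<theta>) *\<^sub>R (m - m') + (I \<theta> q - I \<theta>' q')) \<le> \<gamma>\<theta> * \<eta>\<theta> * dW + K * dW + D"
    proof -
      have "norm (- (\<gamma>\<theta> * \<eta>\<theta>) *\<^sub>R (m - m') + (I \<theta> q - I \<theta>' q'))
          \<le> norm (- (\<gamma>\<theta> * \<eta>\<theta>) *\<^sub>R (m - m')) + norm (I \<theta> q - I \<theta>' q) + norm (I \<theta>' q - I \<theta>' q')"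
      proof -
        have e: "- (\<gamma>\<theta> * \<eta>\<theta>) *\<^sub>R (m - m') + (I \<theta> q - I \<theta>' q') = - (\<gamma>\<theta> * \<eta>\<theta>) *\<^sub>R (m - m') + ((I \<theta> q - I \<theta>' q) + (I \<theta>' q - I \<theta>' q'))"
          by simp
        show ?thesis unfolding e
          using norm_triangle_ineq[of "- (\<gamma>\<theta> * \<eta>\<theta>) *\<^sub>R (m - m')" "(I \<theta> q - I \<theta>' q) + (I \<theta>' q - I \<theta>' q')"]
            norm_triangle_ineq[of "I \<theta> q - I \<theta>' q" "I \<theta>' q - I \<theta>' q'"] by linarith
      qed
      moreover have "norm (- (\<gamma>\<theta> * \<eta>\<theta>) *\<^sub>R (m - m')) \<le> \<gamma>\<theta> * \<eta>\<theta> * dW"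
        using hm params by (simp add: mult_left_mono)
      ultimately show ?thesis using hI unfolding D_def by linarith
    qed
    have n3: "norm (\<eta>x *\<^sub>R (u - u')) \<le> \<eta>x * dU"
      using hu params by (simp add: mult_left_mono)
    have n4: "norm (- (\<gamma>x * \<eta>x) *\<^sub>R (u - u') + (snd (G (\<theta>, x)) - snd (G (\<theta>', x')))) \<le> \<gamma>x * \<eta>x * dU + K * (dW + dU)"
    proof -
      have a: "norm (- (\<gamma>x * \<eta>x) *\<^sub>R (u - u')) \<le> \<gamma>x * \<eta>x * dU"
        using hu params by (simp add: mult_left_mono)
      have "norm (snd (G (\<theta>, x)) - snd (G (\<theta>', x'))) = norm (snd (G (\<theta>, x) - G (\<theta>', x')))" by simp
      also have "\<dots> \<le> norm (G (\<theta>, x) - G (\<theta>', x'))" by (rule norm_snd_le')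
      also have "\<dots> \<le> K * norm ((\<theta>, x) - (\<theta>', x'))" by (rule Lip)
      also have "\<dots> \<le> K * (norm (\<theta> - \<theta>') + norm (x - x'))"
        using norm_Pair_le[of "\<theta> - \<theta>'" "x - x'"] K_pos by (simp add: mult_left_mono)
      also have "\<dots> \<le> K * (dW + dU)" using ht hx K_pos by (simp add: mult_left_mono)
      finally have b: "norm (snd (G (\<theta>, x)) - snd (G (\<theta>', x'))) \<le> K * (dW + dU)" .
      show ?thesis using a b norm_triangle_ineq[of "- (\<gamma>x * \<eta>x) *\<^sub>R (u - u')" "snd (G (\<theta>, x)) - snd (G (\<theta>', x'))"] by linarith
    qed
    have R: "norm (drift \<eta>\<theta> \<gamma>\<theta> \<eta>x \<gamma>x G \<Upsilon> \<omega> q - drift \<eta>\<theta> \<gamma>\<theta> \<eta>x \<gamma>x G \<Upsilon>' \<omega>' q') \<le> C * (dU + dW) + D"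
    proof -
      have "norm (drift \<eta>\<theta> \<gamma>\<theta> \<eta>x \<gamma>x G \<Upsilon> \<omega> q - drift \<eta>\<theta> \<gamma>\<theta> \<eta>x \<gamma>x G \<Upsilon>' \<omega>' q')
        \<le> norm (\<eta>\<theta> *\<^sub>R (m - m')) + norm (- (\<gamma>\<theta> * \<eta>\<theta>) *\<^sub>R (m - m') + (I \<theta> q - I \<theta>' q'))
          + (norm (\<eta>x *\<^sub>R (u - u')) + norm (- (\<gamma>x * \<eta>x) *\<^sub>R (u - u') + (snd (G (\<theta>, x)) - snd (G (\<theta>', x')))))"
        unfolding eq
        using norm_Pair_le[of "(\<eta>\<theta> *\<^sub>R (m - m'), - (\<gamma>\<theta> * \<eta>\<theta>) *\<^sub>R (m - m') + (I \<theta> q - I \<theta>' q'))"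
               "(\<eta>x *\<^sub>R (u - u'), - (\<gamma>x * \<eta>x) *\<^sub>R (u - u') + (snd (G (\<theta>, x)) - snd (G (\<theta>', x'))))"]
          norm_Pair_le[of "\<eta>\<theta> *\<^sub>R (m - m')" "- (\<gamma>\<theta> * \<eta>\<theta>) *\<^sub>R (m - m') + (I \<theta> q - I \<theta>' q')"]
          norm_Pair_le[of "\<eta>x *\<^sub>R (u - u')" "- (\<gamma>x * \<eta>x) *\<^sub>R (u - u') + (snd (G (\<theta>, x)) - snd (G (\<theta>', x')))"]
        by linarith
      also have "\<dots> \<le> \<eta>\<theta> * dW + (\<gamma>\<theta> * \<eta>\<theta> * dW + K * dW + D) + (\<eta>x * dU + (\<gamma>x * \<eta>x * dU + K * (dW + dU)))"
        using n1 n2 n3 n4 by linarith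
      also have "\<dots> \<le> C * (dU + dW) + D"
        using K_pos params dU_def dW_def by (simp add: C_def algebra_simps)
      finally show ?thesis .
    qed
    have WD: "ennreal (D / K) \<le> W1 q q'"
      using W1_bound[OF Lip K_pos q q', of \<theta>'] unfolding D_def I_def .
    have dpos: "0 \<le> dU + dW" by (simp add: dU_def dW_def)
    have "ennreal (norm (drift \<eta>\<theta> \<gamma>\<theta> \<eta>x \<gamma>x G \<Upsilon> \<omega> q - drift \<eta>\<theta> \<gamma>\<theta> \<eta>x \<gamma>x G \<Upsilon>' \<omega>' q'))
        \<le> ennreal (C * (dU + dW) + D)" using R by (rule ennreal_leI)
    also have "\<dots> = ennreal C * ennreal (dU + dW) + ennreal K * ennreal (D / K)"
      using C_pos K_pos dpos by (simp add: D_def ennreal_mult[symmetric] ennreal_plus[symmetric] del: ennreal_plus)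
    also have "\<dots> \<le> ennreal C * ennreal (dU + dW) + ennreal C * W1 q q'"
      using CK WD by (intro add_left_mono mult_mono) (auto simp: ennreal_leI)
    also have "\<dots> = ennreal C * (ennreal (norm (\<Upsilon> - \<Upsilon>') + norm (\<omega> - \<omega>')) + W1 q q')"
      by (simp add: dU_def dW_def distrib_left)
    finally show "ennreal (norm (drift \<eta>\<theta> \<gamma>\<theta> \<eta>x \<gamma>x G \<Upsilon> \<omega> q - drift \<eta>\<theta> \<gamma>\<theta> \<eta>x \<gamma>x G \<Upsilon>' \<omega>' q'))
             \<le> ennreal C * (ennreal (norm (\<Upsilon> - \<Upsilon>') + norm (\<omega> - \<omega>')) + W1 q q')" .
  qed
qed

end
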